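(* Assume the standing setup below. Let $\rho>0$, $\rho_{u_a}>0$ and $\tau\ge0$. If the state and adaptive input of the adaptive closed-loop system satisfy $\sup_{0\le t\le\tau}\|x(t)\|_\infty\le\rho$ and $\sup_{0\le t\le\tau}\|u_a(t)\|_\infty\le\rho_{u_a}$, then the prediction error satisfies $\sup_{0\le t\le\tau}\|\tilde x(t)\|_\infty\le\gamma_0(T)$, where $\gamma_0(T)\triangleq b_{f,\Omega(\rho)}\,\bar\alpha_0(T)\big(\bar\alpha_1(T)+\bar\alpha_2(T)+1\big)$.
   Context: Notation: $\|\cdot\|_\infty$ is the vector $\infty$-norm / induced matrix $\infty$-norm; $\Omega(\rho)=\{z:\|z\|_\infty\le\rho\}$; $\mathfrak{L}$ is Laplace transform. Standing setup: $A_m\in\mathbb{R}^{n\times n}$ Hurwitz, $B\in\mathbb{R}^{n\times m}$ full column rank, $B_v\in\mathbb{R}^{n\times m}$, $v$ a bounded piecewise-continuous command, $x_0\in\mathbb{R}^n$. The uncertainty $f:[0,\infty)\times\mathbb{R}^n\to\mathbb{R}^m$ satisfies: for every compact $\mathcal{Z}$ there are constants with $|f_j(t,x)-f_j(\tau,z)|\le L_{f_j,\mathcal{Z}}\|x-z\|_\infty+l_{f_j,\mathcal{Z}}|t-\tau|$ and $|f_j(t,x)|\le b_{f_j,\mathcal{Z}}$ for $x,z\in\mathcal{Z}$, $t,\tau\ge0$; $b_{f,\mathcal{Z}}=\max_jb_{f_j,\mathcal{Z}}$. The adaptive closed-loop system is $\dot x=A_mx+B_vv+B(u_a+f(t,x))$,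 $x(0)=x_0$, with the $\mathcal{L}_1$ adaptive controller: a Hurwitz $A_e\in\mathbb{R}^{n\times n}$; $B^\perp\in\mathbb{R}^{n\times(n-m)}$ with $(B^\perp)^\top B=0$ and $\mathrm{rank}[B\ B^\perp]=n$; state predictor $\dot{\hat x}=A_mx+B_vv+B(u_a+\hat\sigma_1)+B^\perp\hat\sigma_2+A_e\tilde x$, $\hat x(0)=x_0$, $\tilde x=\hat x-x$; estimation sample time $T>0$, $\Phi(T)=A_e^{-1}(e^{A_eT}-I_n)$; piecewise-constant adaptive law $[\hat\sigma_1(t);\hat\sigma_2(t)]=[\hat\sigma_1(iT);\hat\sigma_2(iT)]$ for $t\in[iT,(i+1)T)$, with $[\hat\sigma_1(iT);\hat\sigma_2(iT)]=-[B\ B^\perp]^{-1}\Phi^{-1}(T)e^{A_eT}\tilde x(iT)$, $i\in\mathbb{Z}_+$; control law $u_a(s)=-\mathcal{C}(s)\mathfrak{L}[\hat\sigma_1(t)]$ with $\mathcal{C}(s)=\mathrm{diag}(k_f^j/(s+k_f^j))$, $k_f^j>0$. Solutions are assumed to exist on $[0,\infty)$. Constants: $\bar\alpha_0(T)=\int_0^T\|e^{A_e(T-\tau)}B\|_\infty d\tau$, $\bar\alpha_1(T)=\max_{t\in[0,T]}\|e^{A_et}\|_\infty$, $\bar\alpha_2(T)=\max_{t\in[0,T]}\int_0^t\|e^{A_e(t-\tau)}\Phi^{-1}(T)e^{A_eT}\|_\infty d\tau$. *)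

theory Defs
  imports "HOL-Analysis.Analysis"
begin

definition vinf :: "real^'n \<Rightarrow> real" where
  "vinf x = Max (range (\<lambda>i. \<bar>x $ i\<bar>))"

definition minf :: "real^'c^'r \<Rightarrow> real" where
  "minf A = Sup {vinf (A *v x) | x. vinf x \<le> 1}"

primrec mpow :: "real^'n^'n \<Rightarrow> nat \<Rightarrow> real^'n^'n" where
  "mpow A 0 = mat 1"
| "mpow A (Suc k) = A ** mpow A k"

definition mexp :: "real^'n^'n \<Rightarrow> real^'n^'n" where
  "mexp A = (\<Sum>k. (1 / fact k) *\<^sub>R mpow A k)"

definition hurwitz :: "real^'n^'n \<Rightarrow> bool" where
  "hurwitz A \<longleftrightarrow> (\<forall>(l::complex) (w::complex^'n).
      w \<noteq> 0 \<longrightarrow> (\<chi> i j. complex_of_real (A $ i $ j)) *v w = l *s w \<longrightarrow> Re l < 0)"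

definition piecewise_continuous :: "(real \<Rightarrow> 'a::topological_space) \<Rightarrow> bool" where
  "piecewise_continuous v \<longleftrightarrow>
     (\<forall>a b. \<exists>S. finite S \<and> (\<forall>t\<in>{a..b} - S. isCont v t)) \<and>
     (\<forall>t. (\<exists>l. (v \<longlongrightarrow> l) (at_left t)) \<and> (\<exists>l. (v \<longlongrightarrow> l) (at_right t)))"

definition Omega :: "real \<Rightarrow> (real^'n) set" where
  "Omega \<rho> = {z. vinf z \<le> \<rho>}"

definition PhiT :: "real^'n^'n \<Rightarrow> real \<Rightarrow> real^'n^'n" where
  "PhiT Ae T = matrix_inv Ae ** (mexp (T *\<^sub>R Ae) - mat 1)"

definition alpha0 :: "real^'n^'n \<Rightarrow> real^'m^'n \<Rightarrow> real \<Rightarrow> real" where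
  "alpha0 Ae B T = integral {0..T} (\<lambda>s. minf (mexp ((T - s) *\<^sub>R Ae) ** B))"

definition alpha1 :: "real^'n^'n \<Rightarrow> real \<Rightarrow> real" where
  "alpha1 Ae T = Sup ((\<lambda>t. minf (mexp (t *\<^sub>R Ae))) ` {0..T})"

definition alpha2 :: "real^'n^'n \<Rightarrow> real \<Rightarrow> real" where
  "alpha2 Ae T = Sup ((\<lambda>t. integral {0..t}
      (\<lambda>s. minf (mexp ((t - s) *\<^sub>R Ae) ** matrix_inv (PhiT Ae T) ** mexp (T *\<^sub>R Ae)))) ` {0..T})"

end

theory Submission
  imports Defs "HOL-Computational_Algebra.Fundamental_Theorem_Algebra"
begin


section \<open>vinf and minf\<close>

lemma vinf_ge: "\<bar>x $ i\<bar> \<le> vinf x"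
  unfolding vinf_def by (rule Max_ge) auto

lemma vinf_le: "(\<And>i. \<bar>x $ i\<bar> \<le> c) \<Longrightarrow> vinf x \<le> c"
  unfolding vinf_def by (subst Max_le_iff) auto

lemma vinf_nonneg: "0 \<le> vinf x"
  using vinf_ge[of x] abs_ge_zero order_trans by blast

lemma vinf_zero[simp]: "vinf 0 = 0"
  by (rule antisym[OF vinf_le vinf_nonneg]) simp

lemma vinf_eq_0: "vinf x = 0 \<Longrightarrow> x = 0"
  using vinf_ge[of x] by (metis abs_le_zero_iff vec_eq_iff zero_index)

lemma vinf_add: "vinf (x + y) \<le> vinf x + vinf y"
  by (rule vinf_le) (metis abs_triangle_ineq add_mono order_trans vector_add_component vinf_ge)

lemma vinf_minus[simp]: "vinf (- x) = vinf x"
  unfolding vinf_def by simp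

lemma vinf_diff: "vinf (x - y) \<le> vinf x + vinf y"
  using vinf_add[of x "-y"] by simp

lemma vinf_scale: "vinf (c *\<^sub>R x) = \<bar>c\<bar> * vinf x"
proof (rule antisym)
  show "vinf (c *\<^sub>R x) \<le> \<bar>c\<bar> * vinf x"
    by (rule vinf_le) (simp add: abs_mult mult_left_mono vinf_ge)
  show "\<bar>c\<bar> * vinf x \<le> vinf (c *\<^sub>R x)"
  proof (cases "c = 0")
    case True then show ?thesis by simp
  next
    case False
    have "vinf x \<le> vinf (c *\<^sub>R x) / \<bar>c\<bar>"
    proof (rule vinf_le)
      fix i show "\<bar>x $ i\<bar> \<le> vinf (c *\<^sub>R x) / \<bar>c\<bar>"
        using False vinf_ge[of "c *\<^sub>R x" i] by (simp add: le_divide_eq abs_mult mult.commute)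
    qed
    then show ?thesis using False by (simp add: le_divide_eq mult.commute)
  qed
qed

lemma vinf_le_norm: "vinf x \<le> norm x"
  by (rule vinf_le) (rule component_le_norm_cart)

definition msum :: "real^'c^'r \<Rightarrow> real" where
  "msum M = (\<Sum>i\<in>UNIV. \<Sum>j\<in>UNIV. \<bar>M $ i $ j\<bar>)"

lemma msum_nonneg: "0 \<le> msum M"
  unfolding msum_def by (simp add: sum_nonneg)

lemma row_le_msum: "(\<Sum>j\<in>UNIV. \<bar>M $ i $ j\<bar>) \<le> msum M"
  unfolding msum_def by (rule member_le_sum) (auto simp: sum_nonneg)

lemma entry_le_msum: "\<bar>M $ i $ j\<bar> \<le> msum M"
  by (rule order_trans[OF _ row_le_msum[of M i]]) (rule member_le_sum, auto)

lemma mv_bound: "vinf (M *v x) \<le> msum M * vinf x"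
proof (rule vinf_le)
  fix i
  have "\<bar>(M *v x) $ i\<bar> = \<bar>\<Sum>j\<in>UNIV. M $ i $ j * x $ j\<bar>"
    by (simp add: matrix_vector_mult_def)
  also have "\<dots> \<le> (\<Sum>j\<in>UNIV. \<bar>M $ i $ j\<bar> * vinf x)"
    by (rule order_trans[OF sum_abs]) (auto intro!: sum_mono simp: abs_mult mult_left_mono vinf_ge)
  also have "\<dots> = (\<Sum>j\<in>UNIV. \<bar>M $ i $ j\<bar>) * vinf x"
    by (simp add: sum_distrib_right)
  also have "\<dots> \<le> msum M * vinf x"
    by (rule mult_right_mono[OF row_le_msum vinf_nonneg])
  finally show "\<bar>(M *v x) $ i\<bar> \<le> msum M * vinf x" .
qed

lemma minf_set_bdd: "bdd_above {vinf (M *v x) | x. vinf x \<le> 1}"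
proof (rule bdd_aboveI)
  fix y assume "y \<in> {vinf (M *v x) | x. vinf x \<le> 1}"
  then obtain x where "y = vinf (M *v x)" "vinf x \<le> 1" by auto
  then show "y \<le> msum M"
    using mv_bound[of M x] msum_nonneg[of M]
    by (metis mult_left_le order_trans vinf_nonneg)
qed

lemma minf_ge: "vinf x \<le> 1 \<Longrightarrow> vinf (M *v x) \<le> minf M"
  unfolding minf_def by (rule cSup_upper[OF _ minf_set_bdd]) auto

lemma minf_nonneg: "0 \<le> minf M"
  using minf_ge[of 0 M] by simp

lemma minf_le: "(\<And>x. vinf x \<le> 1 \<Longrightarrow> vinf (M *v x) \<le> c) \<Longrightarrow> minf M \<le> c"
proof -
  assume a: "\<And>x. vinf x \<le> 1 \<Longrightarrow> vinf (M *v x) \<le> c"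
  have "\<exists>x. vinf x \<le> 1" by (rule exI[of _ 0]) simp
  then show ?thesis unfolding minf_def using a by (intro cSup_least) auto
qed

lemma minf_le_msum: "minf M \<le> msum M"
  by (rule minf_le) (metis mult_left_le msum_nonneg mv_bound order_trans vinf_nonneg)

lemma minf_mult: "vinf (M *v x) \<le> minf M * vinf x"
proof (cases "vinf x = 0")
  case True
  then have "x = 0" using vinf_eq_0 by auto
  then show ?thesis by simp
next
  case False
  then have r: "vinf x > 0" using vinf_nonneg[of x] by simp
  let ?y = "(1 / vinf x) *\<^sub>R x"
  have "vinf ?y = 1" using r by (simp add: vinf_scale)
  then have "vinf (M *v ?y) \<le> minf M" by (intro minf_ge) simp
  also have "M *v ?y = (1 / vinf x) *\<^sub>R (M *v x)" by (simp add: matrix_vector_mult_scaleR)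
  finally have "vinf (M *v x) / vinf x \<le> minf M" using r by (simp add: vinf_scale)
  then show ?thesis using r by (simp add: divide_le_eq)
qed

lemma minf_add: "minf (M + N) \<le> minf M + minf N"
proof (rule minf_le)
  fix x :: "real^'a" assume x: "vinf x \<le> 1"
  have "vinf ((M + N) *v x) \<le> vinf (M *v x) + vinf (N *v x)"
    by (simp add: matrix_vector_mult_add_rdistrib vinf_add)
  also have "\<dots> \<le> minf M * vinf x + minf N * vinf x"
    by (intro add_mono minf_mult)
  also have "\<dots> \<le> minf M + minf N"
    using x vinf_nonneg[of x] minf_nonneg[of M] minf_nonneg[of N]
    by (intro add_mono) (auto intro: mult_left_le)
  finally show "vinf ((M + N) *v x) \<le> minf M + minf N" .
qed

lemma entry_le_norm: "\<bar>(M::real^'c^'r) $ i $ j\<bar> \<le> norm M"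
  using component_le_norm_cart[of "M $ i" j] Finite_Cartesian_Product.norm_nth_le[of M i] by linarith

lemma msum_le_norm: "msum (M::real^'c^'r) \<le> real CARD('r) * real CARD('c) * norm M"
proof -
  have "msum M \<le> (\<Sum>i\<in>(UNIV::'r set). \<Sum>j\<in>(UNIV::'c set). norm M)"
    unfolding msum_def
    by (intro sum_mono) (rule entry_le_norm)
  then show ?thesis by (simp add: mult.assoc)
qed

lemma minf_lipschitz: "(real CARD('r) * real CARD('c))-lipschitz_on UNIV (minf :: real^'c^'r \<Rightarrow> real)"
proof (rule lipschitz_onI)
  fix M N :: "real^'c^'r"
  have 1: "minf M \<le> minf N + minf (M - N)" using minf_add[of N "M - N"] by simp
  have 2: "minf N \<le> minf M + minf (N - M)" using minf_add[of M "N - M"] by simp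
  have 3: "minf (M - N) \<le> real CARD('r) * real CARD('c) * dist M N"
    using minf_le_msum[of "M - N"] msum_le_norm[of "M - N"] by (simp add: dist_norm)
  have 4: "minf (N - M) \<le> real CARD('r) * real CARD('c) * dist M N"
    using minf_le_msum[of "N - M"] msum_le_norm[of "N - M"] by (simp add: dist_norm norm_minus_commute)
  show "dist (minf M) (minf N) \<le> real CARD('r) * real CARD('c) * dist M N"
    using 1 2 3 4 by (simp add: dist_real_def)
qed simp

lemma continuous_on_minf: "continuous_on S G \<Longrightarrow> continuous_on S (\<lambda>s. minf (G s :: real^'c^'r))"
  using continuous_on_compose2[OF lipschitz_on_continuous_on[OF minf_lipschitz] _ subset_UNIV] by blast




section \<open>Matrix exponential\<close>

lemma mpow_Suc_right: "mpow A (Suc k) = mpow A k ** A"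
  by (induction k) (simp_all add: matrix_mul_assoc)

lemma mpow_scaleR: "mpow (t *\<^sub>R A) k = (t ^ k) *\<^sub>R mpow A k"
  by (induction k) (simp_all add: matrix_scalar_ac scalar_matrix_assoc[symmetric])

lemma mpow_entry_bound: "\<bar>mpow A k $ i $ j\<bar> \<le> msum A ^ k"
proof (induction k arbitrary: i j)
  case 0
  then show ?case by (simp add: mat_def)
next
  case (Suc k)
  have "\<bar>mpow A (Suc k) $ i $ j\<bar> = \<bar>\<Sum>l\<in>UNIV. A $ i $ l * mpow A k $ l $ j\<bar>"
    by (simp add: matrix_matrix_mult_def)
  also have "\<dots> \<le> (\<Sum>l\<in>UNIV. \<bar>A $ i $ l\<bar> * msum A ^ k)"
    by (rule order_trans[OF sum_abs]) (auto intro!: sum_mono simp: abs_mult mult_left_mono Suc)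
  also have "\<dots> = (\<Sum>l\<in>UNIV. \<bar>A $ i $ l\<bar>) * msum A ^ k"
    by (simp add: sum_distrib_right)
  also have "\<dots> \<le> msum A * msum A ^ k"
    by (rule mult_right_mono[OF row_le_msum]) (simp add: msum_nonneg)
  finally show ?case by simp
qed

lemma norm_le_msum: "norm (M::real^'c^'r) \<le> msum M"
proof -
  have "norm M \<le> (\<Sum>i\<in>UNIV. norm (M $ i))"
    unfolding norm_vec_def by (rule L2_set_le_sum) simp
  also have "\<dots> \<le> (\<Sum>i\<in>UNIV. \<Sum>j\<in>UNIV. \<bar>M $ i $ j\<bar>)"
    by (intro sum_mono norm_le_l1_cart)
  finally show ?thesis unfolding msum_def .
qed

lemma msum_mpow: "msum (mpow A k) \<le> real CARD('n) * real CARD('n) * msum A ^ k"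
  for A :: "real^'n^'n"
proof -
  have "msum (mpow A k) \<le> (\<Sum>i\<in>(UNIV::'n set). \<Sum>j\<in>(UNIV::'n set). msum A ^ k)"
    unfolding msum_def[of "mpow A k"] by (intro sum_mono mpow_entry_bound)
  then show ?thesis by (simp add: mult.assoc)
qed

lemma summable_mexp: "summable (\<lambda>k. (1 / fact k) *\<^sub>R mpow (C::real^'n^'n) k)"
proof (rule summable_comparison_test')
  let ?K = "real CARD('n) * real CARD('n)"
  show "summable (\<lambda>k. ?K * (inverse (fact k) * msum C ^ k))"
    by (intro summable_mult summable_exp)
  fix k :: nat
  have "norm ((1 / fact k) *\<^sub>R mpow C k) = (1 / fact k) * norm (mpow C k)" by simp
  also have "\<dots> \<le> (1 / fact k) * (?K * msum C ^ k)"
    by (intro mult_left_mono order_trans[OF norm_le_msum msum_mpow]) simp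
  finally show "norm ((1 / fact k) *\<^sub>R mpow C k) \<le> ?K * (inverse (fact k) * msum C ^ k)"
    by (simp add: field_simps)
qed

lemma bounded_linear_entry: "bounded_linear (\<lambda>M::real^'c^'r. M $ i $ j)"
  by (rule bounded_linear_compose[OF bounded_linear_vec_nth bounded_linear_vec_nth])

lemma mexp_entry: "mexp C $ i $ j = (\<Sum>k. (1 / fact k) * mpow C k $ i $ j)"
proof -
  have "(\<lambda>M. M $ i $ j) (\<Sum>k. (1 / fact k) *\<^sub>R mpow C k) = (\<Sum>k. (\<lambda>M. M $ i $ j) ((1 / fact k) *\<^sub>R mpow C k))"
    by (rule bounded_linear.suminf[OF bounded_linear_entry summable_mexp])
  then show ?thesis unfolding mexp_def by simp
qed

lemma diffs_aux: "real (Suc k) * m / fact (Suc k) = m / fact k"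
proof -
  have "fact (Suc k) = real (Suc k) * fact k" by (simp only: fact_Suc)
  then show ?thesis by (simp del: of_nat_Suc)
qed

definition ec :: "real^'n^'n \<Rightarrow> 'n \<Rightarrow> 'n \<Rightarrow> nat \<Rightarrow> real" where
  "ec A i j k = mpow A k $ i $ j / fact k"

lemma mexp_scaled_entry: "mexp (t *\<^sub>R A) $ i $ j = (\<Sum>k. ec A i j k * t ^ k)"
  unfolding mexp_entry mpow_scaleR ec_def by (simp add: ac_simps)

lemma summable_ec: "summable (\<lambda>k. ec A i j k * y ^ k)"
proof (rule summable_comparison_test')
  show "summable (\<lambda>k. inverse (fact k) * (msum A * \<bar>y\<bar>) ^ k)" by (rule summable_exp)
  fix k :: nat
  have "norm (ec A i j k * y ^ k) = \<bar>mpow A k $ i $ j\<bar> * \<bar>y\<bar> ^ k / fact k"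
    by (simp add: ec_def abs_mult power_abs)
  also have "\<dots> \<le> msum A ^ k * \<bar>y\<bar> ^ k / fact k"
    by (intro divide_right_mono mult_right_mono mpow_entry_bound) auto
  finally show "norm (ec A i j k * y ^ k) \<le> inverse (fact k) * (msum A * \<bar>y\<bar>) ^ k"
    by (simp add: field_simps power_mult_distrib)
qed

lemma summable_ec_Suc: "summable (\<lambda>k. mpow A (Suc k) $ i $ j / fact k * y ^ k)"
proof -
  have "summable (\<lambda>k. diffs (ec A i j) k * y ^ k)"
    by (rule termdiff_converges_all) (rule summable_ec)
  moreover have "diffs (ec A i j) k = mpow A (Suc k) $ i $ j / fact k" for k
    by (simp add: diffs_def ec_def diffs_aux del: mpow.simps of_nat_Suc fact_Suc)
  ultimately show ?thesis by simp
qed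

definition DE :: "real^'n^'n \<Rightarrow> real \<Rightarrow> real^'n^'n" where
  "DE A t = (\<chi> i j. \<Sum>k. mpow A (Suc k) $ i $ j / fact k * t ^ k)"

lemma A_mexp: "A ** mexp (t *\<^sub>R A) = DE A t"
proof -
  have "(A ** mexp (t *\<^sub>R A)) $ i $ j = DE A t $ i $ j" for i j
  proof -
    have "(A ** mexp (t *\<^sub>R A)) $ i $ j = (\<Sum>l\<in>UNIV. A $ i $ l * (\<Sum>k. ec A l j k * t ^ k))"
      by (simp add: matrix_matrix_mult_def mexp_scaled_entry)
    also have "\<dots> = (\<Sum>l\<in>UNIV. \<Sum>k. A $ i $ l * (ec A l j k * t ^ k))"
      by (intro sum.cong refl suminf_mult[symmetric] summable_ec)
    also have "\<dots> = (\<Sum>k. \<Sum>l\<in>UNIV. A $ i $ l * (ec A l j k * t ^ k))"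
      by (rule suminf_sum[symmetric]) (intro summable_mult summable_ec)
    also have "\<dots> = (\<Sum>k. mpow A (Suc k) $ i $ j / fact k * t ^ k)"
      by (simp add: ec_def matrix_matrix_mult_def sum_distrib_right sum_divide_distrib mult.assoc)
    finally show ?thesis by (simp add: DE_def)
  qed
  then show ?thesis by (simp add: vec_eq_iff)
qed

lemma mexp_A: "mexp (t *\<^sub>R A) ** A = DE A t"
proof -
  have "(mexp (t *\<^sub>R A) ** A) $ i $ j = DE A t $ i $ j" for i j
  proof -
    have "(mexp (t *\<^sub>R A) ** A) $ i $ j = (\<Sum>l\<in>UNIV. (\<Sum>k. ec A i l k * t ^ k) * A $ l $ j)"
      by (simp add: matrix_matrix_mult_def mexp_scaled_entry)
    also have "\<dots> = (\<Sum>l\<in>UNIV. \<Sum>k. ec A i l k * t ^ k * A $ l $ j)"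
      by (intro sum.cong refl suminf_mult2 summable_ec)
    also have "\<dots> = (\<Sum>k. \<Sum>l\<in>UNIV. ec A i l k * t ^ k * A $ l $ j)"
      by (rule suminf_sum[symmetric]) (intro summable_mult2 summable_ec)
    also have "\<dots> = (\<Sum>k. (mpow A k ** A) $ i $ j / fact k * t ^ k)"
      by (simp add: ec_def matrix_matrix_mult_def sum_distrib_right sum_distrib_left sum_divide_distrib mult_ac del: mpow.simps)
    also have "\<dots> = (\<Sum>k. mpow A (Suc k) $ i $ j / fact k * t ^ k)"
      by (simp only: mpow_Suc_right)
    finally show ?thesis by (simp add: DE_def)
  qed
  then show ?thesis by (simp add: vec_eq_iff)
qed

lemma mexp_commute: "mexp (t *\<^sub>R A) ** A = A ** mexp (t *\<^sub>R A)"
  by (simp add: A_mexp mexp_A)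

lemma mexp_zero: "mexp (0 *\<^sub>R A) = mat 1"
proof -
  have "mexp (0 *\<^sub>R A) $ i $ j = mat 1 $ i $ j" for i j
    unfolding mexp_scaled_entry using powser_zero[of "ec A i j"] by (simp add: ec_def)
  then show ?thesis by (simp add: vec_eq_iff)
qed

lemma vec_has_vector_derivative:
  fixes f :: "real \<Rightarrow> 'a::real_normed_vector^'n"
  assumes "\<And>i. ((\<lambda>t. f t $ i) has_vector_derivative (f' $ i)) (at x within S)"
  shows "(f has_vector_derivative f') (at x within S)"
proof -
  have "((\<lambda>y. (1 / norm (y - x)) *\<^sub>R ((f y $ i) - (f x $ i + (y - x) *\<^sub>R f' $ i))) \<longlongrightarrow> 0) (at x within S)" for i
    using assms[of i] unfolding has_vector_derivative_def has_derivative_within by simp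
  then have "((\<lambda>y. \<chi> i. (1 / norm (y - x)) *\<^sub>R ((f y $ i) - (f x $ i + (y - x) *\<^sub>R f' $ i))) \<longlongrightarrow> (\<chi> i. 0)) (at x within S)"
    by (intro tendsto_vec_lambda)
  moreover have "(\<lambda>y. \<chi> i. (1 / norm (y - x)) *\<^sub>R ((f y $ i) - (f x $ i + (y - x) *\<^sub>R f' $ i))) =
     (\<lambda>y. (1 / norm (y - x)) *\<^sub>R (f y - (f x + (y - x) *\<^sub>R f')))"
    by (rule ext) (simp add: vec_eq_iff)
  ultimately show ?thesis
    unfolding has_vector_derivative_def has_derivative_within
    by (simp add: bounded_linear_scaleR_left zero_vec_def)
qed

lemma mexp_entry_deriv: "((\<lambda>t. mexp (t *\<^sub>R A) $ i $ j) has_vector_derivative (DE A t $ i $ j)) (at t within S)"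
proof -
  have "((\<lambda>t. \<Sum>k. ec A i j k * t ^ k) has_field_derivative (\<Sum>k. diffs (ec A i j) k * t ^ k)) (at t)"
    by (rule termdiffs_strong_converges_everywhere) (rule summable_ec)
  moreover have "diffs (ec A i j) k = mpow A (Suc k) $ i $ j / fact k" for k
    by (simp add: diffs_def ec_def diffs_aux del: mpow.simps of_nat_Suc fact_Suc)
  ultimately have "((\<lambda>t. mexp (t *\<^sub>R A) $ i $ j) has_field_derivative (DE A t $ i $ j)) (at t)"
    by (simp add: mexp_scaled_entry DE_def)
  then show ?thesis
    by (simp add: has_real_derivative_iff_has_vector_derivative has_vector_derivative_at_within)
qed

lemma mexp_deriv: "((\<lambda>t. mexp (t *\<^sub>R A)) has_vector_derivative (A ** mexp (t *\<^sub>R A))) (at t within S)"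
  unfolding A_mexp
  by (intro vec_has_vector_derivative mexp_entry_deriv)

lemma continuous_on_mexp: "continuous_on S (\<lambda>t. mexp (t *\<^sub>R A))"
  unfolding continuous_on_eq_continuous_within using has_vector_derivative_continuous[OF mexp_deriv] by blast




section \<open>Invertibility\<close>

lemma matrix_inv_both: "invertible M \<Longrightarrow> M ** matrix_inv M = mat 1 \<and> matrix_inv M ** M = mat 1"
  unfolding invertible_def matrix_inv_def by (rule someI_ex)

lemma inj_invertible: "(\<And>x. (M::real^'n^'n) *v x = 0 \<Longrightarrow> x = 0) \<Longrightarrow> invertible M"
  using matrix_left_invertible_ker[of M] invertible_left_inverse[of M] by blast

definition cmx :: "real^'n^'n \<Rightarrow> complex^'n^'n" where
  "cmx M = (\<chi> i j. complex_of_real (M $ i $ j))"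

definition cvx :: "real^'n \<Rightarrow> complex^'n" where
  "cvx w = (\<chi> i. complex_of_real (w $ i))"

lemma cmx_mult: "cmx (M ** N) = cmx M ** cmx N"
  by (simp add: vec_eq_iff cmx_def matrix_matrix_mult_def)

lemma cmx_mv: "cmx M *v cvx w = cvx (M *v w)"
  by (simp add: vec_eq_iff cmx_def cvx_def matrix_vector_mult_def)

lemma cvx_eq0: "cvx w = 0 \<longleftrightarrow> w = 0"
  by (simp add: vec_eq_iff cvx_def)

lemma hurwitz_cmx: "hurwitz A \<Longrightarrow> u \<noteq> 0 \<Longrightarrow> cmx A *v u = l *s u \<Longrightarrow> Re l < 0"
  unfolding hurwitz_def cmx_def by blast

lemma hurwitz_inj_A: "hurwitz A \<Longrightarrow> A *v w = 0 \<Longrightarrow> w = 0"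
proof (rule ccontr)
  assume h: "hurwitz A" and a: "A *v w = 0" and w: "w \<noteq> 0"
  have "cmx A *v cvx w = cvx 0" by (simp add: cmx_mv a)
  also have "cvx 0 = 0 *s cvx w" by (simp add: vec_eq_iff cvx_def)
  finally have "cmx A *v cvx w = 0 *s cvx w" .
  then have "Re 0 < 0" using hurwitz_cmx[OF h] w cvx_eq0 by blast
  then show False by simp
qed

lemma mpow_eig: "cmx A *v u = \<mu> *s u \<Longrightarrow> cmx (mpow A k) *v u = (\<mu> ^ k) *s u"
  for A :: "real^'n^'n"
proof (induction k)
  case 0
  have "cmx (mat 1 :: real^'n^'n) = mat 1" by (simp add: cmx_def mat_def vec_eq_iff)
  then have "cmx (mpow A 0) *v u = mat 1 *v u" by simp
  then show ?case using matrix_vector_mul_lid[of u] by simp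
next
  case (Suc k)
  have "cmx (mpow A (Suc k)) *v u = cmx A *v (cmx (mpow A k) *v u)"
    by (simp add: cmx_mult matrix_vector_mul_assoc)
  also have "\<dots> = (\<mu> ^ Suc k) *s u" using Suc by (simp add: vector_scalar_commute vec.scale_scale mult.commute)
  finally show ?case .
qed

lemma mexp_eig:
  assumes "cmx A *v u = \<mu> *s u"
  shows "cmx (mexp (T *\<^sub>R A)) *v u = exp (complex_of_real T * \<mu>) *s u"
proof -
  have "(cmx (mexp (T *\<^sub>R A)) *v u) $ i = (exp (complex_of_real T * \<mu>) *s u) $ i" for i
  proof -
    have "(cmx (mexp (T *\<^sub>R A)) *v u) $ i = (\<Sum>j\<in>UNIV. complex_of_real (\<Sum>k. ec A i j k * T ^ k) * u $ j)"
      by (simp add: cmx_def matrix_vector_mult_def mexp_scaled_entry)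
    also have "\<dots> = (\<Sum>j\<in>UNIV. \<Sum>k. complex_of_real (ec A i j k * T ^ k) * u $ j)"
      by (intro sum.cong refl) (simp only: suminf_of_real[OF summable_ec] suminf_mult2[OF summable_of_real[OF summable_ec]])
    also have "\<dots> = (\<Sum>k. \<Sum>j\<in>UNIV. complex_of_real (ec A i j k * T ^ k) * u $ j)"
      by (rule suminf_sum[symmetric]) (intro summable_mult2 summable_of_real summable_ec)
    also have "\<dots> = (\<Sum>k. (complex_of_real T * \<mu>) ^ k /\<^sub>R fact k * u $ i)"
    proof (rule arg_cong[where f=suminf], rule ext)
      fix k
      have "(\<Sum>j\<in>UNIV. complex_of_real (ec A i j k * T ^ k) * u $ j)
          = complex_of_real (T ^ k / fact k) * (cmx (mpow A k) *v u) $ i"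
        by (simp add: ec_def cmx_def matrix_vector_mult_def sum_distrib_left mult_ac)
      also have "\<dots> = (complex_of_real T * \<mu>) ^ k /\<^sub>R fact k * u $ i"
        using mpow_eig[OF assms, of k]
        by (simp add: scaleR_conv_of_real power_mult_distrib divide_inverse mult_ac)
      finally show "(\<Sum>j\<in>UNIV. complex_of_real (ec A i j k * T ^ k) * u $ j) = (complex_of_real T * \<mu>) ^ k /\<^sub>R fact k * u $ i" .
    qed
    also have "\<dots> = exp (complex_of_real T * \<mu>) * u $ i"
      unfolding exp_def by (rule suminf_mult2[symmetric]) (rule summable_exp_generic)
    finally show ?thesis by simp
  qed
  then show ?thesis by (simp add: vec_eq_iff)
qed




definition Vk :: "complex^'n^'n \<Rightarrow> nat \<Rightarrow> complex^'n \<Rightarrow> complex^'n" where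
  "Vk C k v = ((\<lambda>y. C *v y) ^^ k) v"

lemma Vk_0[simp]: "Vk C 0 v = v" by (simp add: Vk_def)
lemma Vk_Suc: "Vk C (Suc k) v = C *v Vk C k v" by (simp add: Vk_def)

definition papp :: "complex^'n^'n \<Rightarrow> complex poly \<Rightarrow> complex^'n \<Rightarrow> complex^'n" where
  "papp C p v = (\<Sum>k\<le>degree p. coeff p k *s Vk C k v)"

lemma papp_N: "degree p \<le> N \<Longrightarrow> papp C p v = (\<Sum>k\<le>N. coeff p k *s Vk C k v)"
  unfolding papp_def by (rule sum.mono_neutral_left) (auto simp: coeff_eq_0)

lemma papp_lin: "papp C ([:-\<mu>,1:] * q) v = C *v papp C q v - \<mu> *s papp C q v"
proof -
  let ?N = "Suc (degree q)"
  have d: "degree ([:-\<mu>,1:] * q) \<le> ?N"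
    using degree_mult_le[of "[:-\<mu>,1:]" q] by simp
  have eq: "[:-\<mu>,1:] * q = smult (-\<mu>) q + pCons 0 q" by simp
  have "papp C ([:-\<mu>,1:] * q) v = (\<Sum>k\<le>?N. coeff ([:-\<mu>,1:] * q) k *s Vk C k v)" by (rule papp_N[OF d])
  also have "\<dots> = (\<Sum>k\<le>?N. (-\<mu>) *s (coeff q k *s Vk C k v)) + (\<Sum>k\<le>?N. coeff (pCons 0 q) k *s Vk C k v)"
    unfolding eq by (simp add: vec.scale_left_distrib sum.distrib vec.scale_scale) (simp add: sum_subtractf sum_negf)
  also have "(\<Sum>k\<le>?N. (-\<mu>) *s (coeff q k *s Vk C k v)) = (-\<mu>) *s papp C q v"
    by (simp add: papp_N[of q ?N] vec.scale_sum_right)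
  also have "(\<Sum>k\<le>?N. coeff (pCons 0 q) k *s Vk C k v) = C *v papp C q v"
    by (simp only: sum.atMost_Suc_shift) (simp add: papp_def vec.sum vector_scalar_commute Vk_Suc)
  finally show ?thesis by (simp add: vec.scale_minus_left)
qed

lemma Vk_comm: "(\<And>y. E *v (C *v y) = C *v (E *v y)) \<Longrightarrow> E *v Vk C k v = Vk C k (E *v v)"
  by (induction k) (simp_all add: Vk_Suc)

lemma papp_comm: "(\<And>y. E *v (C *v y) = C *v (E *v y)) \<Longrightarrow> E *v papp C q v = papp C q (E *v v)"
  by (simp add: papp_def vec.sum vector_scalar_commute Vk_comm)

lemma eig_exists:
  "p \<noteq> 0 \<Longrightarrow> papp C p v = 0 \<Longrightarrow> v \<noteq> 0 \<Longrightarrow> \<exists>q \<mu>. papp C q v \<noteq> 0 \<and> C *v papp C q v = \<mu> *s papp C q v"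
proof (induction "degree p" arbitrary: p rule: less_induct)
  case less
  show ?case
  proof (cases "degree p = 0")
    case True
    then obtain c where pc: "p = [:c:]" by (metis degree_eq_zeroE)
    then have "c \<noteq> 0" using less.prems by auto
    moreover have "papp C p v = c *s v" using pc by (simp add: papp_def)
    ultimately show ?thesis using less.prems by (simp add: vec.scale_eq_0_iff)
  next
    case False
    then have "\<not> constant (poly p)" by (simp add: constant_degree)
    then obtain \<mu> where "poly p \<mu> = 0" using fundamental_theorem_of_algebra by blast
    then obtain q where pq: "p = [:-\<mu>,1:] * q" using poly_eq_0_iff_dvd by (metis dvdE)
    have q0: "q \<noteq> 0" using less.prems pq by auto
    have "degree p = degree q + 1" using pq q0 degree_mult_eq[of "[:-\<mu>,1:]" q] by simp
    then have dq: "degree q < degree p" by simp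
    have eq: "C *v papp C q v - \<mu> *s papp C q v = 0" using less.prems pq papp_lin by metis
    show ?thesis
    proof (cases "papp C q v = 0")
      case True
      then show ?thesis using less.hyps[OF dq q0 True less.prems(3)] by blast
    next
      case False
      then show ?thesis using eq by auto
    qed
  qed
qed

lemma exists_annih: "\<exists>p. p \<noteq> 0 \<and> papp C p v = 0" for C :: "complex^'n^'n"
proof (cases "inj_on (\<lambda>k. Vk C k v) {..CARD('n)}")
  case True
  let ?S = "(\<lambda>k. Vk C k v) ` {..CARD('n)}"
  have cardS: "card ?S = Suc CARD('n)" using card_image[OF True] by simp
  have "vec.dependent ?S"
  proof (rule ccontr)
    assume "\<not> vec.dependent ?S"
    then have "card ?S \<le> vec.dim ?S" using vec.independent_bound_general by blast
    also have "\<dots> \<le> vec.dim (UNIV :: (complex^'n) set)" by (rule vec.dim_subset) simp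
    also have "\<dots> = CARD('n)" by (simp add: vec.dim_UNIV card_cart_basis)
    finally show False using cardS by simp
  qed
  then obtain u where u: "\<exists>x\<in>?S. u x \<noteq> 0" "(\<Sum>x\<in>?S. u x *s x) = 0"
    using vec.dependent_finite[of ?S] by auto
  define p where "p = (\<Sum>k\<le>CARD('n). monom (u (Vk C k v)) k)"
  have cp: "coeff p k = (if k \<le> CARD('n) then u (Vk C k v) else 0)" for k
    unfolding p_def by (simp add: coeff_sum coeff_monom)
  have dp: "degree p \<le> CARD('n)" unfolding p_def
    by (intro degree_sum_le) (auto intro: order_trans[OF degree_monom_le])
  have "papp C p v = (\<Sum>k\<le>CARD('n). u (Vk C k v) *s Vk C k v)" by (simp add: papp_N[OF dp] cp)
  also have "\<dots> = (\<Sum>x\<in>?S. u x *s x)" by (simp add: sum.reindex[OF True])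
  also have "\<dots> = 0" by (rule u(2))
  finally have "papp C p v = 0" .
  moreover have "p \<noteq> 0"
  proof -
    from u(1) obtain k where "k \<le> CARD('n)" "u (Vk C k v) \<noteq> 0" by auto
    then have "coeff p k \<noteq> 0" by (simp add: cp)
    then show ?thesis by auto
  qed
  ultimately show ?thesis by blast
next
  case False
  then obtain i j where ij: "i \<le> CARD('n)" "j \<le> CARD('n)" "i \<noteq> j" "Vk C i v = Vk C j v"
    by (auto simp: inj_on_def)
  define p where "p = monom (1::complex) i - monom 1 j"
  have dp: "degree p \<le> CARD('n)" unfolding p_def
    by (intro degree_diff_le order_trans[OF degree_monom_le] ij)
  have e: "\<And>k. coeff p k *s Vk C k v = (if i = k then Vk C k v else 0) - (if j = k then Vk C k v else 0)"
    by (simp add: p_def coeff_monom vec.scale_left_diff_distrib)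
  have "papp C p v = Vk C i v - Vk C j v"
    by (simp add: papp_N[OF dp] e sum_subtractf ij)
  then have "papp C p v = 0" using ij by simp
  moreover have "coeff p i \<noteq> 0" using ij by (simp add: p_def coeff_monom)
  then have "p \<noteq> 0" by auto
  ultimately show ?thesis by blast
qed

lemma mexp_fix_zero:
  assumes h: "hurwitz A" and T: "T > 0" and fx: "mexp (T *\<^sub>R A) *v w = w"
  shows "w = 0"
proof (rule ccontr)
  assume w: "w \<noteq> 0"
  define C where "C = cmx A"
  define E where "E = cmx (mexp (T *\<^sub>R A))"
  define v where "v = cvx w"
  have v0: "v \<noteq> 0" using w by (simp add: v_def cvx_eq0)
  have Ev: "E *v v = v" using fx by (simp add: E_def v_def cmx_mv)
  have comm: "E *v (C *v y) = C *v (E *v y)" for y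
    by (simp add: E_def C_def matrix_vector_mul_assoc cmx_mult[symmetric] mexp_commute)
  obtain p where p: "p \<noteq> 0" "papp C p v = 0" using exists_annih by blast
  obtain q \<mu> where q: "papp C q v \<noteq> 0" "C *v papp C q v = \<mu> *s papp C q v"
    using eig_exists[OF p v0] by blast
  define u where "u = papp C q v"
  have Eu: "E *v u = u" using papp_comm[OF comm] Ev by (simp add: u_def)
  have Eu2: "E *v u = exp (complex_of_real T * \<mu>) *s u"
    unfolding E_def u_def by (rule mexp_eig) (use q in \<open>simp add: C_def\<close>)
  have "(exp (complex_of_real T * \<mu>) - 1) *s u = 0"
    using Eu Eu2 by (simp add: vec.scale_left_diff_distrib)
  then have "exp (complex_of_real T * \<mu>) - 1 = 0"
    using q(1) unfolding u_def vec.scale_eq_0_iff by blast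
  then have e1: "exp (complex_of_real T * \<mu>) = 1" by simp
  have "Re \<mu> < 0" using hurwitz_cmx[OF h q(1)] q(2) by (simp add: C_def)
  then have "Re (complex_of_real T * \<mu>) < 0" using T by (simp add: mult_pos_neg)
  then have "norm (exp (complex_of_real T * \<mu>)) < 1" by (simp add: norm_exp_eq_Re)
  then show False using e1 by simp
qed

lemma invertible_E_minus_I:
  assumes "hurwitz A" "T > 0"
  shows "invertible (mexp (T *\<^sub>R A) - mat 1)"
proof (rule inj_invertible)
  fix x assume "(mexp (T *\<^sub>R A) - mat 1) *v x = 0"
  then have "mexp (T *\<^sub>R A) *v x = x" by (simp add: matrix_vector_mult_diff_rdistrib)
  then show "x = 0" using mexp_fix_zero[OF assms] by blast
qed

lemma invertible_Ae:
  assumes "hurwitz A" shows "invertible A"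
  using inj_invertible hurwitz_inj_A[OF assms] by blast

lemma invertible_matrix_inv: "invertible M \<Longrightarrow> invertible (matrix_inv M)"
  using matrix_inv_both[of M] unfolding invertible_def by blast

lemma invertible_PhiT:
  assumes "hurwitz A" "T > 0"
  shows "invertible (PhiT A T)"
  unfolding PhiT_def
  by (intro invertible_mult invertible_matrix_inv invertible_Ae invertible_E_minus_I assms)




lemma bilinear_mv: "bilinear (\<lambda>(M::real^'c^'r) v. M *v v)"
  unfolding bilinear_def
proof (intro conjI allI)
  fix M :: "real^'c^'r" show "linear (\<lambda>v. M *v v)" by (rule matrix_vector_mul_linear)
next
  fix v :: "real^'c" show "linear (\<lambda>M::real^'c^'r. M *v v)"
    by (rule linearI) (simp_all add: matrix_vector_mult_add_rdistrib scaleR_matrix_vector_assoc)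
qed

lemma bb_mv: "bounded_bilinear (\<lambda>(M::real^'c^'r) v. M *v v)"
  using bilinear_mv bilinear_conv_bounded_bilinear by blast

lemma bl_mv_left: "bounded_linear (\<lambda>M::real^'c^'r. M *v (v::real^'c))"
  by (rule bounded_bilinear.bounded_linear_left[OF bb_mv])

lemma bl_mm: "bounded_linear (\<lambda>M::real^'c^'k. (A::real^'k^'r) ** M)"
proof -
  have "linear (\<lambda>M::real^'c^'k. A ** M)"
    by (rule linearI) (simp_all add: matrix_add_ldistrib matrix_scalar_ac scalar_matrix_assoc)
  then show ?thesis using linear_conv_bounded_linear by blast
qed

lemma vinf_integral_le:
  fixes h :: "real \<Rightarrow> real^'n"
  assumes "continuous_on {a..b} h" "g integrable_on {a..b}" "\<And>s. s \<in> {a..b} \<Longrightarrow> vinf (h s) \<le> g s"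
  shows "vinf (integral {a..b} h) \<le> integral {a..b} g"
proof (rule vinf_le)
  fix i
  have ci: "continuous_on {a..b} (\<lambda>s. h s $ i)" by (intro continuous_on_component assms(1))
  have "integral {a..b} h $ i = integral {a..b} (\<lambda>s. h s $ i)"
    using integral_component_eq_cart[OF integrable_continuous_real[OF assms(1)]] by simp
  also have "\<bar>\<dots>\<bar> \<le> integral {a..b} g"
    using integral_norm_bound_integral[OF integrable_continuous_real[OF ci] assms(2)]
      assms(3) vinf_ge order_trans by (metis real_norm_def)
  finally show "\<bar>integral {a..b} h $ i\<bar> \<le> integral {a..b} g" .
qed

lemma integral_flip:
  fixes g :: "real \<Rightarrow> 'a::euclidean_space"
  shows "integral {0..c} (\<lambda>s. g (c - s)) = integral {0..c} g"
proof -
  have "integral {0..c} (\<lambda>s. g (c - s)) = integral {-c + c..0 + c} (\<lambda>x. (\<lambda>u. g (- u)) (x + - c))"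
    by simp
  also have "\<dots> = integral {-c..0} (\<lambda>u. g (- u))"
    using integral_shift_real_ivl[of "-c" "- c" 0 "\<lambda>u. g (- u)"] by simp
  also have "\<dots> = integral {0..c} g"
    using Henstock_Kurzweil_Integration.integral_reflect_real[where a=0 and b=c and f=g] by simp
  finally show ?thesis .
qed

lemma integral_shift_flip:
  fixes h :: "real \<Rightarrow> 'a::euclidean_space"
  shows "integral {a..t} (\<lambda>s. h (t - s)) = integral {0..t - a} (\<lambda>s. h ((t - a) - s))"
proof -
  have "integral {a - a..t - a} (\<lambda>x. (\<lambda>s. h (t - s)) (x + a)) = integral {a..t} (\<lambda>s. h (t - s))"
    by (rule integral_shift_real_ivl)
  then show ?thesis by (simp add: algebra_simps)
qed

lemma integral_le_sub:
  fixes g :: "real \<Rightarrow> real"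
  assumes "continuous_on {0..T} g" "\<And>s. s \<in> {0..T} \<Longrightarrow> 0 \<le> g s" "0 \<le> c" "c \<le> T"
  shows "integral {0..c} g \<le> integral {0..T} g"
proof -
  have "integral {0..c} g + integral {c..T} g = integral {0..T} g"
    by (rule Henstock_Kurzweil_Integration.integral_combine) (use assms in \<open>auto intro: integrable_continuous_real\<close>)
  moreover have "0 \<le> integral {c..T} g"
    using assms by (intro integral_nonneg integrable_continuous_real) (auto elim: continuous_on_subset)
  ultimately show ?thesis by linarith
qed

lemma integral_mexp:
  fixes A :: "real^'n^'n"
  assumes "hurwitz A" "0 \<le> T"
  shows "integral {0..T} (\<lambda>u. mexp (u *\<^sub>R A)) = matrix_inv A ** (mexp (T *\<^sub>R A) - mat 1)"
proof -
  have "((\<lambda>u. A ** mexp (u *\<^sub>R A)) has_integral mexp (T *\<^sub>R A) - mexp (0 *\<^sub>R A)) {0..T}"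
    using assms(2) by (intro fundamental_theorem_of_calculus mexp_deriv)
  moreover have "((\<lambda>u. A ** mexp (u *\<^sub>R A)) has_integral A ** integral {0..T} (\<lambda>u. mexp (u *\<^sub>R A))) {0..T}"
    using has_integral_linear[OF integrable_integral[OF integrable_continuous_real[OF continuous_on_mexp]] bl_mm]
    by (simp add: o_def)
  ultimately have e: "A ** integral {0..T} (\<lambda>u. mexp (u *\<^sub>R A)) = mexp (T *\<^sub>R A) - mat 1"
    using has_integral_unique mexp_zero by metis
  have "matrix_inv A ** (A ** integral {0..T} (\<lambda>u. mexp (u *\<^sub>R A))) = integral {0..T} (\<lambda>u. mexp (u *\<^sub>R A))"
    using matrix_inv_both[OF invertible_Ae[OF assms(1)]] by (simp add: matrix_mul_assoc)
  then show ?thesis using e by simp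
qed




lemma mexp_zero'[simp]: "mexp (0::real^'n^'n) = mat 1"
  using mexp_zero[of "0::real^'n^'n"] by simp

lemma cont_Eshift: "continuous_on S (\<lambda>s. mexp ((t - s) *\<^sub>R A))"
proof -
  have "continuous_on S (\<lambda>s. t - s)" by (intro continuous_intros)
  then show ?thesis
    using continuous_on_compose2[OF continuous_on_mexp[of UNIV A], of S "\<lambda>s. t - s"] by auto
qed

lemma cont_mv: "continuous_on S P \<Longrightarrow> continuous_on S y \<Longrightarrow> continuous_on S (\<lambda>s. (P s::real^'c^'r) *v y s)"
  by (rule bounded_bilinear.continuous_on[OF bb_mv])

lemma bl_mm_right: "bounded_linear (\<lambda>M::real^'k^'r. M ** (Q::real^'c^'k))"
proof -
  have "linear (\<lambda>M::real^'k^'r. M ** Q)"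
    by (rule linearI) (simp_all add: vec_eq_iff matrix_matrix_mult_def sum.distrib distrib_right sum_distrib_left mult.assoc)
  then show ?thesis using linear_conv_bounded_linear by blast
qed

lemma cont_mm: "continuous_on S P \<Longrightarrow> continuous_on S (\<lambda>s. (P s::real^'k^'r) ** (Q::real^'c^'k))"
  using continuous_on_compose2[OF linear_continuous_on[OF bl_mm_right] _ subset_UNIV] by blast

lemma cont_minf_Eshift: "continuous_on S (\<lambda>s. minf (mexp ((t - s) *\<^sub>R A) ** Q))"
  by (intro continuous_on_minf cont_mm cont_Eshift)

lemma cont_minf_E: "continuous_on S (\<lambda>s. minf (mexp (s *\<^sub>R A) ** Q))"
  using cont_minf_Eshift[of S 0 "-A" Q] by simp

theorem lemma4:
  fixes Am Ae :: "real^'n^'n"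
    and B Bv :: "real^'m^'n"
    and Bp :: "nat \<Rightarrow> real^'n"
    and v :: "real \<Rightarrow> real^'m"
    and x0 :: "real^'n"
    and f :: "real \<Rightarrow> real^'n \<Rightarrow> real^'m"
    and kf :: "real^'m"
    and T \<rho> \<rho>ua \<tau> bf :: real
    and x xh :: "real \<Rightarrow> real^'n"
    and ua sig1 :: "real \<Rightarrow> real^'m"
    and sig2 :: "real \<Rightarrow> nat \<Rightarrow> real"
  assumes Am: "hurwitz Am"
    and Brank: "rank B = CARD('m)"
    and v_bdd: "bounded (range v)" and v_pc: "piecewise_continuous v"
    and f_reg: "\<forall>Z. compact Z \<longrightarrow> (\<exists>L l b. \<forall>j t s y z. t \<ge> 0 \<longrightarrow> s \<ge> 0 \<longrightarrow> y \<in> Z \<longrightarrow> z \<in> Z \<longrightarrow>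
                  \<bar>f t y $ j - f s z $ j\<bar> \<le> L j * vinf (y - z) + l j * \<bar>t - s\<bar> \<and> \<bar>f t y $ j\<bar> \<le> b j)"
    and Ae: "hurwitz Ae"
    and Bp_orth: "\<forall>j < CARD('n) - CARD('m). transpose B *v Bp j = 0"
    and Bp_rank: "dim (columns B \<union> Bp ` {..<CARD('n) - CARD('m)}) = CARD('n)"
    and T: "T > 0"
    and kf: "\<forall>j. kf $ j > 0"
    and x_eq: "\<forall>t\<ge>0. ((\<lambda>s. Am *v x s + Bv *v v s + B *v (ua s + f s (x s))) has_integral (x t - x0)) {0..t}"
    and xh_eq: "\<forall>t\<ge>0. ((\<lambda>s. Am *v x s + Bv *v v s + B *v (ua s + sig1 s)
                      + (\<Sum>j<CARD('n) - CARD('m). sig2 s j *\<^sub>R Bp j) + Ae *v (xh s - x s))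
                   has_integral (xh t - x0)) {0..t}"
    and sig_pc: "\<forall>t\<ge>0. sig1 t = sig1 (T * of_int \<lfloor>t / T\<rfloor>) \<and> sig2 t = sig2 (T * of_int \<lfloor>t / T\<rfloor>)"
    and sig_law: "\<forall>i::nat. B *v sig1 (real i * T) + (\<Sum>j<CARD('n) - CARD('m). sig2 (real i * T) j *\<^sub>R Bp j)
                   = - ((matrix_inv (PhiT Ae T) ** mexp (T *\<^sub>R Ae)) *v (xh (real i * T) - x (real i * T)))"
    and ua_eq: "\<forall>t\<ge>0. ((\<lambda>s. \<chi> j. - kf $ j * (ua s $ j + sig1 s $ j)) has_integral ua t) {0..t}"
    and bf: "\<forall>t\<ge>0. \<forall>z\<in>Omega \<rho>. \<forall>j. \<bar>f t z $ j\<bar> \<le> bf"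
    and \<rho>: "\<rho> > 0" and \<rho>ua: "\<rho>ua > 0" and \<tau>: "\<tau> \<ge> 0"
    and x_bnd: "\<forall>t\<in>{0..\<tau>}. vinf (x t) \<le> \<rho>"
    and ua_bnd: "\<forall>t\<in>{0..\<tau>}. vinf (ua t) \<le> \<rho>ua"
  shows "\<forall>t\<in>{0..\<tau>}. vinf (xh t - x t) \<le> bf * alpha0 Ae B T * (alpha1 Ae T + alpha2 Ae T + 1)"
proof -
  define E where "E = (\<lambda>w. mexp (w *\<^sub>R Ae))"
  define e where "e = (\<lambda>s. xh s - x s)"
  define F where "F = (\<lambda>s. f s (x s))"
  define G where "G = (\<lambda>s. B *v sig1 s + (\<Sum>j<CARD('n) - CARD('m). sig2 s j *\<^sub>R Bp j) + Ae *v e s - B *v F s)"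
  define M where "M = matrix_inv (PhiT Ae T) ** mexp (T *\<^sub>R Ae)"
  define c where "c = (\<lambda>i::nat. - (M *v e (real i * T)))"
  define g0 where "g0 = (\<lambda>w. minf (E w ** B))"
  define g2 where "g2 = (\<lambda>w. minf (E w ** M))"
  define a0 where "a0 = alpha0 Ae B T"
  define a1 where "a1 = alpha1 Ae T"
  define a2 where "a2 = alpha2 Ae T"

  have hG: "(G has_integral e t) {0..t}" if t: "t \<ge> 0" for t
  proof -
    have "((\<lambda>s. (Am *v x s + Bv *v v s + B *v (ua s + sig1 s)
                      + (\<Sum>j<CARD('n) - CARD('m). sig2 s j *\<^sub>R Bp j) + Ae *v (xh s - x s))
             - (Am *v x s + Bv *v v s + B *v (ua s + f s (x s)))) has_integral
           (xh t - x0) - (x t - x0)) {0..t}"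
      using xh_eq x_eq t by (intro has_integral_diff) auto
    then show ?thesis by (simp add: G_def e_def F_def matrix_vector_right_distrib algebra_simps)
  qed
  have Gint: "G integrable_on {0..t}" if "t \<ge> 0" for t using hG[OF that] by blast
  have e_eq: "e t = integral {0..t} G" if "t \<ge> 0" for t using hG[OF that] by (simp add: integral_unique)
  have e0: "e 0 = 0" using e_eq[of 0] by simp
  have e_int: "e u = e a + integral {a..u} G" if "0 \<le> a" "a \<le> u" for a u
  proof -
    have "integral {0..a} G + integral {a..u} G = integral {0..u} G"
      using that Gint[of u] by (intro Henstock_Kurzweil_Integration.integral_combine) auto
    then show ?thesis using e_eq that by simp
  qed
  have e_cont: "continuous_on {0..\<tau>} e"
  proof -
    have "continuous_on {0..\<tau>} (\<lambda>t. integral {0..t} G)"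
      by (rule indefinite_integral_continuous_1) (rule Gint[OF \<tau>])
    then show ?thesis using e_eq by (auto intro: continuous_on_eq)
  qed
  have x_cont: "continuous_on {0..\<tau>} x"
  proof -
    let ?X = "\<lambda>s. Am *v x s + Bv *v v s + B *v (ua s + f s (x s))"
    have Xi: "?X integrable_on {0..\<tau>}" using x_eq \<tau> by blast
    have "continuous_on {0..\<tau>} (\<lambda>t. x0 + integral {0..t} ?X)"
      by (intro continuous_intros indefinite_integral_continuous_1 Xi)
    moreover have "x t = x0 + integral {0..t} ?X" if "t \<in> {0..\<tau>}" for t
      using x_eq that by (auto simp: integral_unique)
    ultimately show ?thesis by (auto intro: continuous_on_eq)
  qed

  have F_cont: "continuous_on {0..\<tau>} F"
  proof -
    have cZ: "compact (x ` {0..\<tau>})" by (intro compact_continuous_image x_cont compact_Icc)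
    from f_reg[rule_format, OF cZ] obtain L l b where Llb0: "\<forall>j t s y z. t \<ge> 0 \<longrightarrow> s \<ge> 0 \<longrightarrow> y \<in> x ` {0..\<tau>} \<longrightarrow> z \<in> x ` {0..\<tau>} \<longrightarrow>
                  \<bar>f t y $ j - f s z $ j\<bar> \<le> L j * vinf (y - z) + l j * \<bar>t - s\<bar> \<and> \<bar>f t y $ j\<bar> \<le> b j"
      by blast
    have Llb: "\<bar>F s $ j - F s0 $ j\<bar> \<le> L j * vinf (x s - x s0) + l j * \<bar>s - s0\<bar>"
      if "s \<in> {0..\<tau>}" "s0 \<in> {0..\<tau>}" for j s s0
    proof -
      have "s \<ge> 0" "s0 \<ge> 0" "x s \<in> x ` {0..\<tau>}" "x s0 \<in> x ` {0..\<tau>}" using that by auto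
      then show ?thesis unfolding F_def using Llb0 by blast
    qed
    have "continuous_on {0..\<tau>} (\<lambda>s. F s $ j)" for j
      unfolding continuous_on_def
    proof
      fix s0 assume s0: "s0 \<in> {0..\<tau>}"
      have xl: "(x \<longlongrightarrow> x s0) (at s0 within {0..\<tau>})" using x_cont s0 by (simp add: continuous_on_def)
      have "((\<lambda>s. \<bar>L j\<bar> * norm (x s - x s0) + \<bar>l j\<bar> * \<bar>s - s0\<bar>) \<longlongrightarrow> \<bar>L j\<bar> * norm (x s0 - x s0) + \<bar>l j\<bar> * \<bar>s0 - s0\<bar>) (at s0 within {0..\<tau>})"
        by (intro tendsto_add tendsto_mult tendsto_const tendsto_norm tendsto_diff tendsto_rabs xl tendsto_ident_at)
      then have lim0: "((\<lambda>s. \<bar>L j\<bar> * norm (x s - x s0) + \<bar>l j\<bar> * \<bar>s - s0\<bar>) \<longlongrightarrow> 0) (at s0 within {0..\<tau>})" by simp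
      have ev: "\<forall>\<^sub>F s in at s0 within {0..\<tau>}. norm (F s $ j - F s0 $ j) \<le> \<bar>L j\<bar> * norm (x s - x s0) + \<bar>l j\<bar> * \<bar>s - s0\<bar>"
        unfolding eventually_at_filter
      proof (rule always_eventually, intro allI impI)
        fix s assume s: "s \<in> {0..\<tau>}"
        have 1: "L j * vinf (x s - x s0) \<le> \<bar>L j\<bar> * vinf (x s - x s0)"
          by (rule mult_right_mono[OF abs_ge_self vinf_nonneg])
        have 2: "\<bar>L j\<bar> * vinf (x s - x s0) \<le> \<bar>L j\<bar> * norm (x s - x s0)"
          by (rule mult_left_mono[OF vinf_le_norm abs_ge_zero])
        have 3: "l j * \<bar>s - s0\<bar> \<le> \<bar>l j\<bar> * \<bar>s - s0\<bar>"
          by (rule mult_right_mono[OF abs_ge_self abs_ge_zero])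
        show "norm (F s $ j - F s0 $ j) \<le> \<bar>L j\<bar> * norm (x s - x s0) + \<bar>l j\<bar> * \<bar>s - s0\<bar>"
          using Llb[OF s s0, of j] 1 2 3 by simp
      qed
      show "((\<lambda>s. F s $ j) \<longlongrightarrow> F s0 $ j) (at s0 within {0..\<tau>})"
        using Lim_null_comparison[OF ev lim0] by (simp add: Lim_null[symmetric])
    qed
    then have "continuous_on {0..\<tau>} (\<lambda>s. \<chi> j. F s $ j)" by (intro continuous_on_vec_lambda)
    then show ?thesis by simp
  qed

  have bf0: "0 \<le> bf"
  proof -
    have "(0::real^'n) \<in> Omega \<rho>" using \<rho> by (simp add: Omega_def)
    then have "\<bar>f 0 0 $ undefined\<bar> \<le> bf" using bf by auto
    then show ?thesis by linarith
  qed
  have F_bnd: "vinf (F s) \<le> bf" if "s \<in> {0..\<tau>}" for s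
  proof (rule vinf_le)
    fix j
    have "x s \<in> Omega \<rho>" using x_bnd that by (simp add: Omega_def)
    then show "\<bar>F s $ j\<bar> \<le> bf" using bf that by (simp add: F_def)
  qed

  have g0_cont: "continuous_on S g0" for S unfolding g0_def E_def by (rule cont_minf_E)
  have g2_cont: "continuous_on S g2" for S unfolding g2_def E_def by (rule cont_minf_E)
  have g0_nn: "0 \<le> g0 w" for w by (simp add: g0_def minf_nonneg)
  have g2_nn: "0 \<le> g2 w" for w by (simp add: g2_def minf_nonneg)
  have a0_eq: "a0 = integral {0..T} g0"
    unfolding a0_def alpha0_def g0_def E_def
    using integral_flip[where g="\<lambda>w. minf (mexp (w *\<^sub>R Ae) ** B)" and c=T] by simp
  have a0_nn: "0 \<le> a0" unfolding a0_eq
    using T by (intro integral_nonneg integrable_continuous_real g0_cont g0_nn)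
  have bdd1: "bdd_above ((\<lambda>t. minf (mexp (t *\<^sub>R Ae))) ` {0..T})"
  proof -
    have "continuous_on {0..T} (\<lambda>t. minf (mexp (t *\<^sub>R Ae)))"
      using cont_minf_E[of "{0..T}" Ae "mat 1"] by simp
    then show ?thesis
      by (intro bounded_imp_bdd_above compact_imp_bounded compact_continuous_image compact_Icc)
  qed
  have a1_ge: "minf (E w) \<le> a1" if "w \<in> {0..T}" for w
    unfolding a1_def alpha1_def E_def using that by (intro cSup_upper bdd1) auto
  have a1_nn: "0 \<le> a1" using a1_ge[of 0] T minf_nonneg[of "E 0"] by auto
  have alpha2_fun: "(\<lambda>t. integral {0..t} (\<lambda>s. minf (mexp ((t - s) *\<^sub>R Ae) ** matrix_inv (PhiT Ae T) ** mexp (T *\<^sub>R Ae))))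
        = (\<lambda>t. integral {0..t} (\<lambda>s. g2 (t - s)))"
    by (simp add: g2_def E_def M_def matrix_mul_assoc)
  have bdd2: "bdd_above ((\<lambda>t. integral {0..t} (\<lambda>s. g2 (t - s))) ` {0..T})"
  proof (rule bdd_aboveI)
    fix y assume "y \<in> (\<lambda>t. integral {0..t} (\<lambda>s. g2 (t - s))) ` {0..T}"
    then obtain t where t: "t \<in> {0..T}" "y = integral {0..t} (\<lambda>s. g2 (t - s))" by auto
    then have "y = integral {0..t} g2" using integral_flip[where g=g2 and c=t] by simp
    also have "\<dots> \<le> integral {0..T} g2" using t by (intro integral_le_sub g2_cont g2_nn) auto
    finally show "y \<le> integral {0..T} g2" .
  qed
  have a2_ge: "integral {0..w} (\<lambda>s. g2 (w - s)) \<le> a2" if "w \<in> {0..T}" for w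
    unfolding a2_def alpha2_def alpha2_fun using that by (intro cSup_upper bdd2) auto
  have a2_nn: "0 \<le> a2" using a2_ge[of 0] T by simp

  have sig_const: "B *v sig1 s + (\<Sum>j<CARD('n) - CARD('m). sig2 s j *\<^sub>R Bp j) = c i"
    if "real i * T \<le> s" "s < real (Suc i) * T" for i s
  proof -
    have "0 \<le> real i * T" using T by simp
    then have s0: "s \<ge> 0" using that by linarith
    have "real i \<le> s / T" using that T by (simp add: pos_le_divide_eq)
    moreover have "s / T < real i + 1" using that T by (simp add: pos_divide_less_eq algebra_simps)
    ultimately have "\<lfloor>s / T\<rfloor> = int i" by (simp add: floor_eq_iff)
    then have "T * of_int \<lfloor>s / T\<rfloor> = real i * T" by simp
    then have "sig1 s = sig1 (real i * T)" "sig2 s = sig2 (real i * T)" using sig_pc s0 by metis+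
    then show ?thesis using sig_law[rule_format, of i] unfolding c_def M_def e_def by simp
  qed

  \<comment> \<open>variation of constants on one sampling interval\<close>
  have voc: "e t = E (t - real i * T) *v e (real i * T)
                 + integral {real i * T..t} (\<lambda>s. E (t - s) *v c i)
                 - integral {real i * T..t} (\<lambda>s. E (t - s) *v (B *v F s))"
    if ti: "real i * T \<le> t" "t \<le> real (Suc i) * T" "t \<le> \<tau>" for i t
  proof -
    define a where "a = real i * T"
    have a0': "0 \<le> a" using T by (simp add: a_def)
    define H where "H = (\<lambda>s. c i + Ae *v e s - B *v F s)"
    have sub: "{a..t} \<subseteq> {0..\<tau>}" using a0' ti by (auto simp: a_def)
    have H_cont: "continuous_on {a..t} H" unfolding H_def
      by (intro continuous_intros cont_mv continuous_on_subset[OF e_cont sub] continuous_on_subset[OF F_cont sub])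
    have e_int2: "e u = e a + integral {a..u} H" if u: "u \<in> {a..t}" for u
    proof -
      have "integral {a..u} G = integral {a..u} H"
      proof (rule integral_spike[of "{u}"])
        show "negligible {u}" by simp
        fix s assume "s \<in> {a..u} - {u}"
        then have "a \<le> s" "s < real (Suc i) * T" using u ti by (auto simp: a_def)
        then show "H s = G s" using sig_const[of i s] by (simp add: H_def G_def a_def)
      qed
      then show ?thesis using e_int[of a u] a0' u by simp
    qed
    have de: "(e has_vector_derivative H s) (at s within {a..t})" if s: "s \<in> {a..t}" for s
    proof -
      have d1: "((\<lambda>u. e a + integral {a..u} H) has_vector_derivative H s) (at s within {a..t})"
        using has_vector_derivative_add[OF has_vector_derivative_const[of "e a"] integral_has_vector_derivative[OF H_cont s]] by simp
      show ?thesis by (rule has_vector_derivative_transform[OF s _ d1]) (rule e_int2)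
    qed
    have dE: "((\<lambda>s. E (t - s)) has_vector_derivative (-1) *\<^sub>R (Ae ** E (t - s))) (at s within {a..t})" for s
    proof -
      have "((\<lambda>s. t - s) has_vector_derivative (0 - 1)) (at s within {a..t})"
        by (intro has_vector_derivative_diff has_vector_derivative_const has_vector_derivative_id)
      then have "((\<lambda>s. t - s) has_vector_derivative -1) (at s within {a..t})" by simp
      from vector_diff_chain_within[OF this mexp_deriv]
      show ?thesis by (simp add: o_def E_def)
    qed
    have dk: "((\<lambda>s. E (t - s) *v e s) has_vector_derivative (E (t - s) *v c i - E (t - s) *v (B *v F s))) (at s within {a..t})"
      if s: "s \<in> {a..t}" for s
    proof -
      have "((\<lambda>s. E (t - s) *v e s) has_vector_derivative (E (t - s) *v H s + ((-1) *\<^sub>R (Ae ** E (t - s))) *v e s)) (at s within {a..t})"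
        by (rule bounded_bilinear.has_vector_derivative[OF bb_mv dE de[OF s]])
      moreover have "E (t - s) *v H s + ((-1) *\<^sub>R (Ae ** E (t - s))) *v e s = E (t - s) *v c i - E (t - s) *v (B *v F s)"
      proof -
        have 1: "E (t - s) *v (Ae *v e s) = (Ae ** E (t - s)) *v e s"
          by (simp add: matrix_vector_mul_assoc E_def mexp_commute)
        have 2: "((-1) *\<^sub>R (Ae ** E (t - s))) *v e s = - ((Ae ** E (t - s)) *v e s)"
          using scaleR_matrix_vector_assoc[of "-1" "Ae ** E (t - s)" "e s"] by simp
        have 3: "E (t - s) *v H s = E (t - s) *v c i + E (t - s) *v (Ae *v e s) - E (t - s) *v (B *v F s)"
          by (simp only: H_def matrix_vector_right_distrib matrix_vector_mult_diff_distrib)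
        show ?thesis by (simp only: 1 2 3) simp
      qed
      ultimately show ?thesis by simp
    qed
    have at: "a \<le> t" using ti by (simp add: a_def)
    have ftc: "((\<lambda>s. E (t - s) *v c i - E (t - s) *v (B *v F s)) has_integral (E (t - t) *v e t - E (t - a) *v e a)) {a..t}"
      by (rule fundamental_theorem_of_calculus[OF at dk])
    have c1: "continuous_on {a..t} (\<lambda>s. E (t - s) *v c i)"
      unfolding E_def by (intro cont_mv cont_Eshift continuous_intros)
    have c2: "continuous_on {a..t} (\<lambda>s. E (t - s) *v (B *v F s))"
      unfolding E_def by (intro cont_mv cont_Eshift continuous_intros continuous_on_subset[OF F_cont sub])
    have h1: "integral {a..t} (\<lambda>s. E (t - s) *v c i - E (t - s) *v (B *v F s)) = e t - E (t - a) *v e a"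
      using integral_unique[OF ftc] by (simp add: E_def)
    have h2: "integral {a..t} (\<lambda>s. E (t - s) *v c i - E (t - s) *v (B *v F s))
        = integral {a..t} (\<lambda>s. E (t - s) *v c i) - integral {a..t} (\<lambda>s. E (t - s) *v (B *v F s))"
      by (intro integral_diff integrable_continuous_real c1 c2)
    have "e t = E (t - a) *v e a + (e t - E (t - a) *v e a)" by simp
    also have "e t - E (t - a) *v e a = integral {a..t} (\<lambda>s. E (t - s) *v c i) - integral {a..t} (\<lambda>s. E (t - s) *v (B *v F s))"
      using h1 h2 by simp
    finally show ?thesis unfolding a_def by (simp only: add_diff_eq)
  qed

  have term3: "vinf (integral {real i * T..t} (\<lambda>s. E (t - s) *v (B *v F s))) \<le> bf * a0"
    if ti: "real i * T \<le> t" "t \<le> real (Suc i) * T" "t \<le> \<tau>" for i t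
  proof -
    define a where "a = real i * T"
    have a0': "0 \<le> a" using T by (simp add: a_def)
    have sub: "{a..t} \<subseteq> {0..\<tau>}" using a0' ti by (auto simp: a_def)
    have c2: "continuous_on {a..t} (\<lambda>s. E (t - s) *v (B *v F s))"
      unfolding E_def by (intro cont_mv cont_Eshift continuous_intros continuous_on_subset[OF F_cont sub])
    have "vinf (integral {a..t} (\<lambda>s. E (t - s) *v (B *v F s))) \<le> integral {a..t} (\<lambda>s. g0 (t - s) * bf)"
    proof (rule vinf_integral_le[OF c2])
      show "(\<lambda>s. g0 (t - s) * bf) integrable_on {a..t}"
        unfolding g0_def E_def by (intro integrable_continuous_real continuous_intros cont_minf_Eshift)
      fix s assume s: "s \<in> {a..t}"
      have "vinf (E (t - s) *v (B *v F s)) = vinf ((E (t - s) ** B) *v F s)" by (simp add: matrix_vector_mul_assoc)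
      also have "\<dots> \<le> g0 (t - s) * vinf (F s)" unfolding g0_def by (rule minf_mult)
      also have "\<dots> \<le> g0 (t - s) * bf" using F_bnd s sub g0_nn by (intro mult_left_mono) auto
      finally show "vinf (E (t - s) *v (B *v F s)) \<le> g0 (t - s) * bf" .
    qed
    also have "integral {a..t} (\<lambda>s. g0 (t - s) * bf) = integral {a..t} (\<lambda>s. g0 (t - s)) * bf"
      by simp
    also have "integral {a..t} (\<lambda>s. g0 (t - s)) = integral {0..t - a} g0"
      using integral_shift_flip[where a=a and t=t and h=g0] integral_flip[where g=g0 and c="t - a"] by simp
    also have "\<dots> \<le> a0" unfolding a0_eq using ti T
      by (intro integral_le_sub g0_cont g0_nn) (auto simp: a_def algebra_simps)
    finally have "vinf (integral {a..t} (\<lambda>s. E (t - s) *v (B *v F s))) \<le> a0 * bf"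
      using bf0 by (simp add: mult_right_mono)
    then show ?thesis by (simp add: a_def mult.commute)
  qed

  have grid: "vinf (e (real i * T)) \<le> bf * a0" if "real i * T \<le> \<tau>" for i
    using that
  proof (induction i)
    case 0
    then show ?case using bf0 a0_nn e0 by simp
  next
    case (Suc i)
    define a where "a = real i * T"
    define t where "t = real (Suc i) * T"
    have ti: "a \<le> t" "t \<le> real (Suc i) * T" "t \<le> \<tau>" using Suc.prems T by (auto simp: a_def t_def)
    have ta: "t - a = T" by (simp add: a_def t_def algebra_simps)
    have "integral {a..t} (\<lambda>s. E (t - s)) = integral {0..T} (\<lambda>s. E (T - s))"
      using integral_shift_flip[where a=a and t=t and h=E] ta by simp
    also have "\<dots> = integral {0..T} E" by (rule integral_flip)
    also have "\<dots> = PhiT Ae T" unfolding E_def PhiT_def using T Ae by (intro integral_mexp) auto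
    finally have iE: "integral {a..t} (\<lambda>s. E (t - s)) = PhiT Ae T" .
    have "integral {a..t} (\<lambda>s. E (t - s) *v c i) = integral {a..t} (\<lambda>s. E (t - s)) *v c i"
    proof -
      have "integral {a..t} ((\<lambda>M. M *v c i) \<circ> (\<lambda>s. E (t - s))) = (\<lambda>M. M *v c i) (integral {a..t} (\<lambda>s. E (t - s)))"
        unfolding E_def by (intro integral_linear integrable_continuous_real cont_Eshift bl_mv_left)
      then show ?thesis by (simp add: o_def)
    qed
    also have "\<dots> = PhiT Ae T *v c i" by (simp only: iE)
    also have "\<dots> = - ((PhiT Ae T ** M) *v e a)"
      by (simp add: c_def a_def linear_neg[OF matrix_vector_mul_linear] matrix_vector_mul_assoc)
    also have "\<dots> = - (E T *v e a)"
      using matrix_inv_both[OF invertible_PhiT[OF Ae T]]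
      by (simp add: M_def matrix_mul_assoc E_def)
    finally have cancel: "integral {a..t} (\<lambda>s. E (t - s) *v c i) = - (E T *v e a)" .
    have "e t = - integral {a..t} (\<lambda>s. E (t - s) *v (B *v F s))"
    proof -
      have ta2: "t - real i * T = T" using ta by (simp add: a_def)
      have "e t = E T *v e a + integral {a..t} (\<lambda>s. E (t - s) *v c i) - integral {a..t} (\<lambda>s. E (t - s) *v (B *v F s))"
        using voc[of i t] ti unfolding ta2 a_def by simp
      then show ?thesis unfolding cancel by simp
    qed
    then have "vinf (e t) = vinf (integral {a..t} (\<lambda>s. E (t - s) *v (B *v F s)))" by simp
    also have "\<dots> \<le> bf * a0" using term3[of i t] ti by (simp add: a_def)
    finally show ?case by (simp add: t_def)
  qed

  show ?thesis
  proof
    fix t assume t: "t \<in> {0..\<tau>}"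
    define i where "i = nat \<lfloor>t / T\<rfloor>"
    have fl: "real i * T \<le> t" "t < real (Suc i) * T"
    proof -
      have "0 \<le> t / T" using t T by simp
      then have "real i = of_int \<lfloor>t / T\<rfloor>" by (simp add: i_def)
      moreover have "of_int \<lfloor>t / T\<rfloor> \<le> t / T" "t / T < of_int \<lfloor>t / T\<rfloor> + 1" by linarith+
      ultimately show "real i * T \<le> t" "t < real (Suc i) * T"
        using T by (simp_all add: le_divide_eq divide_less_eq algebra_simps)
    qed
    define a where "a = real i * T"
    have ti: "real i * T \<le> t" "t \<le> real (Suc i) * T" "t \<le> \<tau>" using fl t by auto
    have ta: "0 \<le> t - a" "t - a \<le> T" using fl by (auto simp: a_def algebra_simps)
    define V where "V = vinf (e a)"
    have V: "V \<le> bf * a0" unfolding V_def a_def using grid[of i] ti by simp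
    have V0: "0 \<le> V" by (simp add: V_def vinf_nonneg)
    have b1: "vinf (E (t - a) *v e a) \<le> a1 * V"
      unfolding V_def using minf_mult[of "E (t - a)" "e a"] a1_ge[of "t - a"] ta vinf_nonneg[of "e a"]
      by (meson atLeastAtMost_iff mult_right_mono order_trans)
    have b2: "vinf (integral {a..t} (\<lambda>s. E (t - s) *v c i)) \<le> a2 * V"
    proof -
      have c1: "continuous_on {a..t} (\<lambda>s. E (t - s) *v c i)"
        unfolding E_def by (intro cont_mv cont_Eshift continuous_intros)
      have "vinf (integral {a..t} (\<lambda>s. E (t - s) *v c i)) \<le> integral {a..t} (\<lambda>s. g2 (t - s) * V)"
      proof (rule vinf_integral_le[OF c1])
        show "(\<lambda>s. g2 (t - s) * V) integrable_on {a..t}"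
          unfolding g2_def E_def by (intro integrable_continuous_real continuous_intros cont_minf_Eshift)
        fix s assume s: "s \<in> {a..t}"
        have "vinf (E (t - s) *v c i) = vinf ((E (t - s) ** M) *v e a)"
          by (simp add: c_def a_def matrix_vector_mul_assoc linear_neg[OF matrix_vector_mul_linear])
        also have "\<dots> \<le> g2 (t - s) * V" unfolding g2_def V_def by (rule minf_mult)
        finally show "vinf (E (t - s) *v c i) \<le> g2 (t - s) * V" .
      qed
      also have "integral {a..t} (\<lambda>s. g2 (t - s) * V) = integral {a..t} (\<lambda>s. g2 (t - s)) * V" by simp
      also have "integral {a..t} (\<lambda>s. g2 (t - s)) = integral {0..t - a} (\<lambda>s. g2 ((t - a) - s))"
        by (rule integral_shift_flip)
      also have "\<dots> \<le> a2" using a2_ge[of "t - a"] ta by simp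
      finally show ?thesis using V0 by (simp add: mult_right_mono mult.commute order_trans)
    qed
    have b3: "vinf (integral {a..t} (\<lambda>s. E (t - s) *v (B *v F s))) \<le> bf * a0"
      using term3[OF ti] by (simp add: a_def)
    have "vinf (e t) \<le> vinf (E (t - a) *v e a) + vinf (integral {a..t} (\<lambda>s. E (t - s) *v c i))
                        + vinf (integral {a..t} (\<lambda>s. E (t - s) *v (B *v F s)))"
      using voc[OF ti] vinf_add vinf_diff unfolding a_def[symmetric]
      by (metis (no_types, lifting) add_right_mono order_trans)
    also have "\<dots> \<le> a1 * V + a2 * V + bf * a0" using b1 b2 b3 by linarith
    also have "\<dots> \<le> a1 * (bf * a0) + a2 * (bf * a0) + bf * a0"
      using V a1_nn a2_nn bf0 by (intro add_mono mult_left_mono) auto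
    also have "\<dots> = bf * alpha0 Ae B T * (alpha1 Ae T + alpha2 Ae T + 1)"
      by (simp add: a0_def a1_def a2_def algebra_simps)
    finally show "vinf (xh t - x t) \<le> bf * alpha0 Ae B T * (alpha1 Ae T + alpha2 Ae T + 1)"
      by (simp add: e_def)
  qed
qed


end
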